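(* Assume the setup in the context. Let $t\in T_{j_1}$, $s\in T_{j_2}$, $\bar z\in\mathcal{Z}$. If $\frac{d}{dz}Q(t,\bar z)\neq\frac{d}{dz}Q(s,\bar z)$, then there exist neighborhoods $N$ of $t$ (in $T_{j_1}$), $M$ of $s$ (in $T_{j_2}$), and $W$ of $\bar z$ such that $P\big(\{z\in W: V(N,z)=V(M,z)\}\big)=0$.
   Context: $z$ is an absolutely continuous random vector in $\mathbb{R}^{d_z}$ with distribution $P$, and $\mathcal{Z}\subset\mathbb{R}^{d_z}$ is measurable with $P(z\in\mathcal{Z})=1$. $T=\bigcup_{j\in J}T_j$ is a disjoint union of finitely or countably many second-countable Hausdorff manifolds, possibly with boundary or corner. $Q:T\times\mathcal{Z}\to\mathbb{R}$ is continuous on each $T_j\times\mathcal{Z}$, and for every $(t,z)\in T_j\times\mathcal{Z}$, $Q(t,z)$ is differentiable in $z$ with derivative $\frac{d}{dz}Q(t,z)$ continuous in $(t,z)$. For $K\subset T$, $V(K,z)=\inf_{t\in K}Q(t,z)$. *)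

theory Defs
  imports "HOL-Analysis.Analysis" "HOL-Probability.Probability"
begin

text \<open>Local model of an n-dimensional manifold with corners:
  [0,inf)^k x R^(n-k), realised inside Euclidean_space n (functions nat => real
  vanishing from index n on).\<close>
definition corner_model :: "nat \<Rightarrow> nat \<Rightarrow> (nat \<Rightarrow> real) topology" where
  "corner_model n k = subtopology (Euclidean_space n) {x. \<forall>i<k. 0 \<le> x i}"

definition manifold_with_corners :: "'a topology \<Rightarrow> bool" where
  "manifold_with_corners X \<longleftrightarrow>
     Hausdorff_space X \<and> second_countable X \<and>
     (\<exists>n. \<forall>x\<in>topspace X. \<exists>U. openin X U \<and> x \<in> U \<and>
        (\<exists>k\<le>n. \<exists>W. openin (corner_model n k) W \<and>
            subtopology X U homeomorphic_space subtopology (corner_model n k) W))"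

definition Vinf :: "('t \<Rightarrow> 'z \<Rightarrow> real) \<Rightarrow> 't set \<Rightarrow> 'z \<Rightarrow> ereal" where
  "Vinf Q K z = (INF t\<in>K. ereal (Q t z))"

end

theory Submission
  imports Defs
begin


lemma corner_lc: "locally_compact_space (corner_model n k)"
proof -
  have "closedin (Euclidean_space n) (topspace (Euclidean_space n) \<inter> {x. \<forall>i<k. 0 \<le> x i})"
  proof -
    have "closed {x::nat\<Rightarrow>real. \<forall>i<k. 0 \<le> x i}"
    proof -
      have "{x::nat\<Rightarrow>real. \<forall>i<k. 0 \<le> x i} = (\<Inter>i\<in>{..<k}. (\<lambda>x. x i) -` {0..})" by auto
      moreover have "closed ((\<lambda>x::nat\<Rightarrow>real. x i) -` {0..})" for i
        by (intro closed_vimage) (auto intro: continuous_on_product_coordinates)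
      ultimately show ?thesis by auto
    qed
    moreover have "closed (topspace (Euclidean_space n))"
      using closedin_Euclidean_space_iff by blast
    ultimately show ?thesis
      by (simp add: closedin_Euclidean_space_iff closed_Int)
  qed
  then have "locally_compact_space (subtopology (Euclidean_space n) (topspace (Euclidean_space n) \<inter> {x. \<forall>i<k. 0 \<le> x i}))"
    by (rule locally_compact_space_closed_subset[OF locally_compact_Euclidean_space])
  then show ?thesis unfolding corner_model_def subtopology_restrict .
qed

lemma manifold_lc:
  assumes "manifold_with_corners X"
  shows "locally_compact_space X"
proof -
  from assms have H: "Hausdorff_space X" unfolding manifold_with_corners_def by blast
  from assms obtain n where n: "\<forall>x\<in>topspace X. \<exists>U. openin X U \<and> x \<in> U \<and>
        (\<exists>k\<le>n. \<exists>W. openin (corner_model n k) W \<and>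
            subtopology X U homeomorphic_space subtopology (corner_model n k) W)"
    unfolding manifold_with_corners_def by blast
  show ?thesis unfolding locally_compact_space_def
  proof
    fix x assume x: "x \<in> topspace X"
    have "\<exists>U. openin X U \<and> x \<in> U \<and>
        (\<exists>k\<le>n. \<exists>W. openin (corner_model n k) W \<and>
            subtopology X U homeomorphic_space subtopology (corner_model n k) W)"
      using n x by (rule bspec)
    then obtain U k W where U: "openin X U" "x \<in> U" and W: "openin (corner_model n k) W"
      and hm: "subtopology X U homeomorphic_space subtopology (corner_model n k) W"
      by (elim exE conjE) 
    have hc: "Hausdorff_space (corner_model n k)"
      unfolding corner_model_def
      by (rule Hausdorff_space_subtopology[OF metrizable_imp_Hausdorff_space[OF metrizable_Euclidean_space]])
    have "locally_compact_space (subtopology (corner_model n k) W)"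
      by (rule locally_compact_space_open_subset[OF _ corner_lc W]) (use hc in simp)
    then have lc: "locally_compact_space (subtopology X U)"
      using homeomorphic_locally_compact_space[OF hm] by simp
    have "x \<in> topspace (subtopology X U)" using x U by auto
    then obtain V K where VK: "openin (subtopology X U) V" "compactin (subtopology X U) K" "x \<in> V" "V \<subseteq> K"
      using lc unfolding locally_compact_space_def by blast
    show "\<exists>U K. openin X U \<and> compactin X K \<and> x \<in> U \<and> U \<subseteq> K"
    proof (intro exI conjI)
      show "openin X V" using VK(1) U(1) by (rule openin_trans_full)
      show "compactin X K" using VK(2) by (simp add: compactin_subtopology)
    qed (use VK in auto)
  qed
qed

lemma manifold_cpt_nbhd:
  fixes T :: "'a::topological_space set"
  assumes M: "manifold_with_corners (top_of_set T)" and A: "open A" and xT: "x \<in> T" and xA: "x \<in> A"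
  shows "\<exists>U K. openin (top_of_set T) U \<and> compact K \<and> x \<in> U \<and> U \<subseteq> K \<and> K \<subseteq> T \<inter> A"
proof -
  have lc: "locally_compact_space (top_of_set T)"
    using M by (rule manifold_lc)
  have hs: "Hausdorff_space (top_of_set T)"
    using M unfolding manifold_with_corners_def by (rule conjunct1)
  have nb: "neighbourhood_base_of (compactin (top_of_set T)) (top_of_set T)"
    using locally_compact_space_neighbourhood_base[of "top_of_set T"] lc hs by simp
  have op: "openin (top_of_set T) (T \<inter> A)" using A by (simp add: openin_open_Int)
  have xTA: "x \<in> T \<inter> A" using xT xA by simp
  obtain U V where UV: "openin (top_of_set T) U" "compactin (top_of_set T) V" "x \<in> U" "U \<subseteq> V" "V \<subseteq> T \<inter> A"
    using nb op xTA unfolding neighbourhood_base_of by meson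
  have "compact V" using UV(2) by (simp add: compactin_subtopology)
  then show ?thesis using UV by blast
qed


lemma cone_closure:
  fixes S :: "'z::euclidean_space set" and u :: 'z and c :: real
  assumes "\<forall>x\<in>S. \<forall>y\<in>S. \<bar>u \<bullet> (x - y)\<bar> \<le> c * norm (x - y)"
  shows "\<forall>x\<in>closure S. \<forall>y\<in>closure S. \<bar>u \<bullet> (x - y)\<bar> \<le> c * norm (x - y)"
proof -
  let ?R = "{p::'z\<times>'z. \<bar>u \<bullet> (fst p - snd p)\<bar> \<le> c * norm (fst p - snd p)}"
  have "closed ?R"
    by (intro closed_Collect_le continuous_intros)
  moreover have "S \<times> S \<subseteq> ?R" using assms by auto
  ultimately have "closure (S \<times> S) \<subseteq> ?R" by (rule closure_minimal[rotated])
  then have sub: "closure S \<times> closure S \<subseteq> ?R" by (simp only: closure_Times)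
  show ?thesis
  proof (intro ballI)
    fix x y assume "x \<in> closure S" "y \<in> closure S"
    then have "(x, y) \<in> ?R" using sub by blast
    then show "\<bar>u \<bullet> (x - y)\<bar> \<le> c * norm (x - y)" by simp
  qed
qed

lemma cone_null:
  fixes S :: "'z::euclidean_space set" and u :: 'z
  assumes u: "u \<noteq> 0" and bS: "bounded S"
    and cone: "\<forall>x\<in>S. \<forall>y\<in>S. \<bar>u \<bullet> (x - y)\<bar> \<le> norm u / 2 * norm (x - y)"
  shows "\<exists>C\<in>null_sets lborel. S \<subseteq> C"
proof -
  define C where "C = closure S"
  have cC: "compact C" using bS by (simp add: C_def compact_closure)
  have coneC: "\<forall>x\<in>C. \<forall>y\<in>C. \<bar>u \<bullet> (x - y)\<bar> \<le> norm u / 2 * norm (x - y)"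
    unfolding C_def by (rule cone_closure[OF cone])
  have "bounded C" by (rule compact_imp_bounded[OF cC])
  then obtain R where R: "\<forall>x\<in>C. norm x \<le> R" unfolding bounded_pos by (elim exE conjE)
  define T where "T = (\<lambda>n i. (+) ((real i / real n) *\<^sub>R u) ` C)"
  have disj: "disjoint_family_on (T n) {..<n}" for n
  proof (unfold disjoint_family_on_def, intro ballI impI)
    fix i j assume ij: "i \<in> {..<n}" "j \<in> {..<n}" "i \<noteq> j"
    show "T n i \<inter> T n j = {}"
    proof (rule ccontr)
      assume "T n i \<inter> T n j \<noteq> {}"
      then obtain x y where xy: "x \<in> C" "y \<in> C" "(real i / real n) *\<^sub>R u + x = (real j / real n) *\<^sub>R u + y"
        unfolding T_def by blast
      define d where "d = real j / real n - real i / real n"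
      have dne: "d \<noteq> 0" using ij by (auto simp: d_def divide_eq_eq)
      have xyd: "x - y = d *\<^sub>R u" using xy(3) unfolding d_def by (simp add: algebra_simps)
      have "\<bar>u \<bullet> (x - y)\<bar> = \<bar>d\<bar> * (norm u * norm u)"
        by (simp add: xyd abs_mult power2_norm_eq_inner[symmetric] power2_eq_square)
      moreover have "norm u / 2 * norm (x - y) = \<bar>d\<bar> * (norm u * norm u) / 2"
        by (simp add: xyd)
      moreover have "\<bar>u \<bullet> (x - y)\<bar> \<le> norm u / 2 * norm (x - y)" using coneC xy by blast
      moreover have "0 < \<bar>d\<bar> * (norm u * norm u)" using dne u by simp
      ultimately show False by linarith
    qed
  qed
  have Tsub: "T n i \<subseteq> cball 0 (R + norm u)" if "i < n" for n i
  proof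
    fix z assume "z \<in> T n i"
    then obtain x where x: "x \<in> C" "z = (real i / real n) *\<^sub>R u + x" unfolding T_def by blast
    have "real i / real n \<le> 1" using that by simp
    then have "(real i / real n) * norm u \<le> norm u"
      by (intro mult_left_le_one_le) auto
    then have "norm ((real i / real n) *\<^sub>R u) \<le> norm u"
      by simp
    moreover have "norm x \<le> R" using R x(1) by (rule bspec)
    ultimately show "z \<in> cball 0 (R + norm u)" using x norm_triangle_ineq[of "(real i / real n) *\<^sub>R u" x] by auto
  qed
  have Tm: "T n i \<in> lmeasurable" for n i
    unfolding T_def by (intro lmeasurable_compact compact_translation cC)
  have Tmeas: "measure lebesgue (T n i) = measure lebesgue C" for n i
    unfolding T_def by (rule measure_translation)
  define B where "B = measure lebesgue (cball (0::'z) (R + norm u))"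
  have bound: "real n * measure lebesgue C \<le> B" for n
  proof -
    have "measure lebesgue (\<Union>i\<in>{..<n}. T n i) = (\<Sum>i\<in>{..<n}. measure lebesgue (T n i))"
      by (rule measure_finite_Union) (auto intro!: fmeasurableD fmeasurableD2 Tm disj)
    also have "\<dots> = real n * measure lebesgue C" by (simp add: Tmeas)
    finally have eq: "measure lebesgue (\<Union>i\<in>{..<n}. T n i) = real n * measure lebesgue C" .
    have "measure lebesgue (\<Union>i\<in>{..<n}. T n i) \<le> B"
      unfolding B_def
      by (rule measure_mono_fmeasurable) (use Tsub Tm in \<open>auto intro!: sets.finite_UN fmeasurableD simp: emeasure_compact_finite\<close>)
    then show ?thesis using eq by simp
  qed
  have m0: "measure lebesgue C = 0"
  proof (rule ccontr)
    assume "measure lebesgue C \<noteq> 0"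
    then have pos: "measure lebesgue C > 0" using measure_nonneg[of lebesgue C] by linarith
    obtain n :: nat where "n > B / measure lebesgue C" using reals_Archimedean2 by blast
    then have "real n * measure lebesgue C > B" using pos by (simp add: divide_less_eq)
    with bound[of n] show False by linarith
  qed
  have Cl: "C \<in> lmeasurable" using cC by (rule lmeasurable_compact)
  have "C \<in> null_sets lebesgue"
  proof (rule null_setsI)
    have "emeasure lebesgue C = ennreal (measure lebesgue C)"
      by (rule emeasure_eq_ennreal_measure) (rule fmeasurableD2[OF Cl])
    then show "emeasure lebesgue C = 0" using m0 by simp
    show "C \<in> sets lebesgue" by (rule fmeasurableD[OF Cl])
  qed
  moreover have "C \<in> sets lborel" using cC by (simp add: borel_compact)
  ultimately have "C \<in> null_sets lborel" by (simp add: null_sets_completion_iff)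
  moreover have "S \<subseteq> C" by (simp add: C_def closure_subset)
  ultimately show ?thesis by blast
qed


lemma dq_nbhd:
  fixes DQ :: "'a::topological_space \<Rightarrow> 'z::metric_space \<Rightarrow> 'v::real_normed_vector"
  assumes c: "continuous_on (T \<times> Z) (\<lambda>(t, z). DQ t z)" and t0: "t0 \<in> T" and z0: "z0 \<in> Z" and r: "r > 0"
  shows "\<exists>A \<rho>. open A \<and> t0 \<in> A \<and> \<rho> > 0 \<and>
     (\<forall>t'\<in>T \<inter> A. \<forall>z\<in>Z. dist z z0 < \<rho> \<longrightarrow> norm (DQ t' z - DQ t0 z0) < r)"
proof -
  have "(t0, z0) \<in> T \<times> Z" using t0 z0 by simp
  moreover have "open (ball (DQ t0 z0) r)" by simp
  moreover have "(\<lambda>(t, z). DQ t z) (t0, z0) \<in> ball (DQ t0 z0) r" using r by simp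
  ultimately obtain Op where O: "open Op" "(t0, z0) \<in> Op"
      "\<forall>p\<in>T \<times> Z. p \<in> Op \<longrightarrow> (\<lambda>(t, z). DQ t z) p \<in> ball (DQ t0 z0) r"
    using c unfolding continuous_on_topological by meson
  obtain A B where AB: "open A" "open B" "(t0, z0) \<in> A \<times> B" "A \<times> B \<subseteq> Op"
    using open_prod_elim[OF O(1) O(2)] by blast
  obtain \<rho> where \<rho>: "\<rho> > 0" "ball z0 \<rho> \<subseteq> B"
    using AB(2,3) open_contains_ball by blast
  show ?thesis
  proof (intro exI conjI ballI impI)
    fix t' z assume t': "t' \<in> T \<inter> A" and z: "z \<in> Z" and d: "dist z z0 < \<rho>"
    have "z \<in> B" using \<rho>(2) d by (auto simp: dist_commute)
    then have "(t', z) \<in> Op" using AB(4) t' by blast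
    then have "DQ t' z \<in> ball (DQ t0 z0) r" using O(3) t' z by auto
    then show "norm (DQ t' z - DQ t0 z0) < r" by (simp add: dist_norm norm_minus_commute)
  qed (use AB \<rho> in auto)
qed

lemma minimizer:
  fixes Q :: "'a::topological_space \<Rightarrow> 'z::topological_space \<Rightarrow> real"
  assumes c: "continuous_on (T \<times> Z) (\<lambda>(t, z). Q t z)" and K: "compact K" "K \<subseteq> T" "K \<noteq> {}" and z: "z \<in> Z"
  shows "\<exists>t'\<in>K. \<forall>t''\<in>K. Q t' z \<le> Q t'' z"
proof -
  have "continuous_on K (\<lambda>t'. (t', z))" by (intro continuous_intros)
  moreover have "(\<lambda>t'. (t', z)) ` K \<subseteq> T \<times> Z" using K z by auto
  ultimately have "continuous_on K ((\<lambda>(t, z). Q t z) \<circ> (\<lambda>t'. (t', z)))"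
    using continuous_on_subset[OF c] continuous_on_compose by blast
  then have "continuous_on K (\<lambda>t'. Q t' z)" by (simp add: o_def)
  then show ?thesis using continuous_attains_inf[OF K(1) K(3)] by blast
qed

lemma Vinf_min:
  assumes "t' \<in> K" "\<forall>t''\<in>K. Q t' z \<le> Q t'' z"
  shows "Vinf Q K z = ereal (Q t' z)"
  unfolding Vinf_def
proof (rule antisym)
  show "(INF t\<in>K. ereal (Q t z)) \<le> ereal (Q t' z)" using assms(1) by (rule INF_lower)
  show "ereal (Q t' z) \<le> (INF t\<in>K. ereal (Q t z))" using assms(2) by (auto intro!: INF_greatest)
qed

lemma key_ineq:
  fixes v a b \<alpha>x \<alpha>y \<beta>x \<beta>y :: "'z::real_inner"
  assumes min1: "Fy \<le> p1" and min2: "Fx \<le> p2" and min3: "Fy \<le> q1" and min4: "Fx \<le> q2"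
    and R1: "\<bar>p1 - Fx - \<alpha>x \<bullet> v\<bar> \<le> r * norm v"
    and R2: "\<bar>p2 - Fy - \<alpha>y \<bullet> (- v)\<bar> \<le> r * norm v"
    and R3: "\<bar>q1 - Fx - \<beta>x \<bullet> v\<bar> \<le> r * norm v"
    and R4: "\<bar>q2 - Fy - \<beta>y \<bullet> (- v)\<bar> \<le> r * norm v"
    and D1: "norm (\<alpha>x - a) \<le> r" and D2: "norm (\<alpha>y - a) \<le> r"
    and D3: "norm (\<beta>x - b) \<le> r" and D4: "norm (\<beta>y - b) \<le> r"
  shows "\<bar>(a - b) \<bullet> v\<bar> \<le> 4 * r * norm v"
proof -
  have cs: "\<bar>(w - c) \<bullet> v\<bar> \<le> r * norm v" if "norm (w - c) \<le> r" for w c :: 'z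
    using Cauchy_Schwarz_ineq2[of "w - c" v] that mult_right_mono[OF that norm_ge_zero[of v]] by linarith
  have e1: "\<bar>\<alpha>x \<bullet> v - a \<bullet> v\<bar> \<le> r * norm v" using cs[OF D1] by (simp add: inner_diff_left)
  have e2: "\<bar>\<alpha>y \<bullet> v - a \<bullet> v\<bar> \<le> r * norm v" using cs[OF D2] by (simp add: inner_diff_left)
  have e3: "\<bar>\<beta>x \<bullet> v - b \<bullet> v\<bar> \<le> r * norm v" using cs[OF D3] by (simp add: inner_diff_left)
  have e4: "\<bar>\<beta>y \<bullet> v - b \<bullet> v\<bar> \<le> r * norm v" using cs[OF D4] by (simp add: inner_diff_left)
  have R2': "\<bar>p2 - Fy + \<alpha>y \<bullet> v\<bar> \<le> r * norm v" using R2 by simp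
  have R4': "\<bar>q2 - Fy + \<beta>y \<bullet> v\<bar> \<le> r * norm v" using R4 by simp
  have "(a - b) \<bullet> v = a \<bullet> v - b \<bullet> v" by (simp add: inner_diff_left)
  then show ?thesis using min1 min2 min3 min4 R1 R2' R3 R4' e1 e2 e3 e4 by (simp add: abs_le_iff)
qed

theorem lemma6:
  fixes P :: "'z::euclidean_space measure"
    and Z :: "'z set"
    and J :: "'j set"
    and Tj :: "'j \<Rightarrow> 'a::topological_space set"
    and Q :: "'a \<Rightarrow> 'z \<Rightarrow> real"
    and DQ :: "'a \<Rightarrow> 'z \<Rightarrow> 'z"
  assumes P_prob: "prob_space P"
    and P_sets: "sets P = sets borel"
    and P_ac: "absolutely_continuous lborel P"
    and Z_meas: "Z \<in> sets P"
    and Z_full: "emeasure P Z = 1"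
    and J_countable: "countable J"
    and Tj_disj: "disjoint_family_on Tj J"
    and Tj_manifold: "\<And>j. j \<in> J \<Longrightarrow> manifold_with_corners (top_of_set (Tj j))"
    and Q_cont: "\<And>j. j \<in> J \<Longrightarrow> continuous_on (Tj j \<times> Z) (\<lambda>(t, z). Q t z)"
    and Q_deriv: "\<And>j t z. j \<in> J \<Longrightarrow> t \<in> Tj j \<Longrightarrow> z \<in> Z \<Longrightarrow>
                   ((\<lambda>y. Q t y) has_derivative (\<lambda>h. DQ t z \<bullet> h)) (at z)"
    and DQ_cont: "\<And>j. j \<in> J \<Longrightarrow> continuous_on (Tj j \<times> Z) (\<lambda>(t, z). DQ t z)"
    and j1: "j1 \<in> J" and j2: "j2 \<in> J"
    and t: "t \<in> Tj j1" and s: "s \<in> Tj j2"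
    and zbar: "zbar \<in> Z"
    and neq: "DQ t zbar \<noteq> DQ s zbar"
  shows "\<exists>N M W.
           (\<exists>U. openin (top_of_set (Tj j1)) U \<and> t \<in> U \<and> U \<subseteq> N) \<and> N \<subseteq> Tj j1 \<and>
           (\<exists>U. openin (top_of_set (Tj j2)) U \<and> s \<in> U \<and> U \<subseteq> M) \<and> M \<subseteq> Tj j2 \<and>
           zbar \<in> interior W \<and>
           {z \<in> W. Vinf Q N z = Vinf Q M z} \<in> null_sets (completion P)"
proof -
  define a where "a = DQ t zbar"
  define b where "b = DQ s zbar"
  define u where "u = a - b"
  define r where "r = norm u / 8"
  have u0: "u \<noteq> 0" using neq by (simp add: u_def a_def b_def)
  have r0: "r > 0" using u0 by (simp add: r_def)
  obtain A1 \<rho>1 where A1: "open A1" "t \<in> A1" "\<rho>1 > 0"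
    "\<forall>t'\<in>Tj j1 \<inter> A1. \<forall>z\<in>Z. dist z zbar < \<rho>1 \<longrightarrow> norm (DQ t' z - a) < r"
    using dq_nbhd[OF DQ_cont[OF j1] t zbar r0] unfolding a_def by blast
  obtain A2 \<rho>2 where A2: "open A2" "s \<in> A2" "\<rho>2 > 0"
    "\<forall>t'\<in>Tj j2 \<inter> A2. \<forall>z\<in>Z. dist z zbar < \<rho>2 \<longrightarrow> norm (DQ t' z - b) < r"
    using dq_nbhd[OF DQ_cont[OF j2] s zbar r0] unfolding b_def by blast
  obtain U1 N where UN: "openin (top_of_set (Tj j1)) U1" "compact N" "t \<in> U1" "U1 \<subseteq> N" "N \<subseteq> Tj j1 \<inter> A1"
    using manifold_cpt_nbhd[OF Tj_manifold[OF j1] A1(1) t A1(2)] by blast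
  obtain U2 M where UM: "openin (top_of_set (Tj j2)) U2" "compact M" "s \<in> U2" "U2 \<subseteq> M" "M \<subseteq> Tj j2 \<inter> A2"
    using manifold_cpt_nbhd[OF Tj_manifold[OF j2] A2(1) s A2(2)] by blast
  define \<rho> where "\<rho> = min \<rho>1 \<rho>2"
  have \<rho>0: "\<rho> > 0" using A1(3) A2(3) by (simp add: \<rho>_def)
  define W where "W = ball zbar \<rho>"
  have NT: "N \<subseteq> Tj j1" and MT: "M \<subseteq> Tj j2" using UN(5) UM(5) by auto
  have Nne: "N \<noteq> {}" and Mne: "M \<noteq> {}" using UN(3,4) UM(3,4) by auto
  define tz where "tz = (\<lambda>z. SOME t'. t' \<in> N \<and> (\<forall>t''\<in>N. Q t' z \<le> Q t'' z))"
  define sz where "sz = (\<lambda>z. SOME t'. t' \<in> M \<and> (\<forall>t''\<in>M. Q t' z \<le> Q t'' z))"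
  have tz: "tz z \<in> N \<and> (\<forall>t''\<in>N. Q (tz z) z \<le> Q t'' z)" if "z \<in> Z" for z
  proof -
    have "\<exists>t'. t' \<in> N \<and> (\<forall>t''\<in>N. Q t' z \<le> Q t'' z)"
      using minimizer[OF Q_cont[OF j1] UN(2) NT Nne that] by blast
    then show ?thesis unfolding tz_def by (rule someI_ex)
  qed
  have sz: "sz z \<in> M \<and> (\<forall>t''\<in>M. Q (sz z) z \<le> Q t'' z)" if "z \<in> Z" for z
  proof -
    have "\<exists>t'. t' \<in> M \<and> (\<forall>t''\<in>M. Q t' z \<le> Q t'' z)"
      using minimizer[OF Q_cont[OF j2] UM(2) MT Mne that] by blast
    then show ?thesis unfolding sz_def by (rule someI_ex)
  qed
  define good where "good = (\<lambda>k z. z \<in> Z \<and> dist z zbar < \<rho> \<and> Q (tz z) z = Q (sz z) z \<and>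
     (\<forall>y. norm (y - z) < 1 / real (Suc k) \<longrightarrow>
        \<bar>Q (tz z) y - Q (tz z) z - DQ (tz z) z \<bullet> (y - z)\<bar> \<le> r * norm (y - z)) \<and>
     (\<forall>y. norm (y - z) < 1 / real (Suc k) \<longrightarrow>
        \<bar>Q (sz z) y - Q (sz z) z - DQ (sz z) z \<bullet> (y - z)\<bar> \<le> r * norm (y - z)))"
  define S where "S = (\<lambda>k c. {z. good k z \<and> dist z c < 1 / (4 * real (Suc k))})"
  obtain D :: "'z set" where D: "countable D" "\<And>X. open X \<Longrightarrow> X \<noteq> {} \<Longrightarrow> \<exists>d\<in>D. d \<in> X"
    using countable_dense_exists by blast
  have Snull: "\<exists>C\<in>null_sets lborel. S k c \<subseteq> C" for k c
  proof (rule cone_null[OF u0])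
    show "bounded (S k c)"
      by (rule bounded_subset[OF bounded_ball[of c "1 / (4 * real (Suc k))"]]) (auto simp: S_def dist_commute)
    show "\<forall>x\<in>S k c. \<forall>y\<in>S k c. \<bar>u \<bullet> (x - y)\<bar> \<le> norm u / 2 * norm (x - y)"
    proof (intro ballI)
      fix x y assume x: "x \<in> S k c" and y: "y \<in> S k c"
      have gx: "good k x" and gy: "good k y" using x y by (auto simp: S_def)
      have "dist x y \<le> dist x c + dist y c" using dist_triangle[of x y c] by (simp add: dist_commute)
      also have "\<dots> < 1 / (4 * real (Suc k)) + 1 / (4 * real (Suc k))"
        using x y by (intro add_strict_mono) (auto simp: S_def)
      also have "\<dots> \<le> 1 / real (Suc k)" by (simp add: field_simps)
      finally have dxy: "norm (y - x) < 1 / real (Suc k)" "norm (x - y) < 1 / real (Suc k)"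
        by (auto simp: dist_norm norm_minus_commute)
      define v where "v = y - x"
      have xZ: "x \<in> Z" and yZ: "y \<in> Z" using gx gy by (auto simp: good_def)
      have dx: "dist x zbar < \<rho>" and dy: "dist y zbar < \<rho>" using gx gy by (auto simp: good_def)
      have eqx: "Q (tz x) x = Q (sz x) x" and eqy: "Q (tz y) y = Q (sz y) y"
        using gx gy by (auto simp: good_def)
      have tzx: "tz x \<in> Tj j1 \<inter> A1" "tz y \<in> Tj j1 \<inter> A1" using tz[OF xZ] tz[OF yZ] UN(5) by auto
      have szx: "sz x \<in> Tj j2 \<inter> A2" "sz y \<in> Tj j2 \<inter> A2" using sz[OF xZ] sz[OF yZ] UM(5) by auto
      have D1: "norm (DQ (tz x) x - a) \<le> r" using A1(4) tzx(1) xZ dx by (force simp: \<rho>_def)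
      have D2: "norm (DQ (tz y) y - a) \<le> r" using A1(4) tzx(2) yZ dy by (force simp: \<rho>_def)
      have D3: "norm (DQ (sz x) x - b) \<le> r" using A2(4) szx(1) xZ dx by (force simp: \<rho>_def)
      have D4: "norm (DQ (sz y) y - b) \<le> r" using A2(4) szx(2) yZ dy by (force simp: \<rho>_def)
      have min1: "Q (tz y) y \<le> Q (tz x) y" using tz[OF yZ] tz[OF xZ] by blast
      have min2: "Q (tz x) x \<le> Q (tz y) x" using tz[OF yZ] tz[OF xZ] by blast
      have min3: "Q (tz y) y \<le> Q (sz x) y" using sz[OF yZ] sz[OF xZ] eqy by auto
      have min4: "Q (tz x) x \<le> Q (sz y) x" using sz[OF yZ] sz[OF xZ] eqx by auto
      have R1: "\<bar>Q (tz x) y - Q (tz x) x - DQ (tz x) x \<bullet> v\<bar> \<le> r * norm v"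
        using gx dxy(1) unfolding good_def v_def by blast
      have R2: "\<bar>Q (tz y) x - Q (tz y) y - DQ (tz y) y \<bullet> (- v)\<bar> \<le> r * norm v"
        using gy dxy(2) unfolding good_def v_def by (auto simp: norm_minus_commute)
      have R3: "\<bar>Q (sz x) y - Q (tz x) x - DQ (sz x) x \<bullet> v\<bar> \<le> r * norm v"
        using gx dxy(1) eqx unfolding good_def v_def by auto
      have R4: "\<bar>Q (sz y) x - Q (tz y) y - DQ (sz y) y \<bullet> (- v)\<bar> \<le> r * norm v"
        using gy dxy(2) eqy unfolding good_def v_def by (auto simp: norm_minus_commute)
      have "\<bar>(a - b) \<bullet> v\<bar> \<le> 4 * r * norm v"
        by (rule key_ineq[OF min1 min2 min3 min4 R1 R2 R3 R4 D1 D2 D3 D4])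
      then have "\<bar>u \<bullet> (y - x)\<bar> \<le> norm u / 2 * norm (y - x)"
        by (simp add: u_def v_def r_def)
      then show "\<bar>u \<bullet> (x - y)\<bar> \<le> norm u / 2 * norm (x - y)"
        by (simp add: inner_diff_right norm_minus_commute abs_minus_commute)
    qed
  qed
  define Cn where "Cn = (\<lambda>k c. SOME C. C \<in> null_sets lborel \<and> S k c \<subseteq> C)"
  have Cn: "Cn k c \<in> null_sets lborel \<and> S k c \<subseteq> Cn k c" for k c
    unfolding Cn_def using Snull[of k c] by (rule someI_ex[OF bexE]) blast+
  have CnP: "Cn k c \<in> null_sets P" for k c
    using Cn[of k c] P_ac unfolding absolutely_continuous_def by blast
  have spP: "space P = UNIV" using sets_eq_imp_space_eq[OF P_sets] by simp
  have ZcP: "UNIV - Z \<in> null_sets P"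
  proof (rule null_setsI)
    interpret prob_space P by (rule P_prob)
    show "UNIV - Z \<in> sets P" using Z_meas spP by (metis sets.compl_sets)
    have "emeasure P (space P - Z) = emeasure P (space P) - emeasure P Z"
      by (rule emeasure_compl[OF Z_meas]) (simp add: Z_full)
    then show "emeasure P (UNIV - Z) = 0" using Z_full emeasure_space_1 spP by simp
  qed
  define Big where "Big = (UNIV - Z) \<union> (\<Union>k\<in>UNIV. \<Union>c\<in>D. Cn k c)"
  have BigP: "Big \<in> null_sets P"
    unfolding Big_def
    by (intro null_sets.Un ZcP null_sets_UN' D(1) CnP) auto
  have sub: "{z \<in> W. Vinf Q N z = Vinf Q M z} \<subseteq> Big"
  proof
    fix z assume zE: "z \<in> {z \<in> W. Vinf Q N z = Vinf Q M z}"
    show "z \<in> Big"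
    proof (cases "z \<in> Z")
      case False then show ?thesis by (simp add: Big_def)
    next
      case True
      have dz: "dist z zbar < \<rho>" using zE by (simp add: W_def dist_commute)
      have "Vinf Q N z = ereal (Q (tz z) z)" using tz[OF True] by (intro Vinf_min) auto
      moreover have "Vinf Q M z = ereal (Q (sz z) z)" using sz[OF True] by (intro Vinf_min) auto
      ultimately have eq: "Q (tz z) z = Q (sz z) z" using zE by simp
      have dt: "((\<lambda>y. Q (tz z) y) has_derivative (\<lambda>h. DQ (tz z) z \<bullet> h)) (at z)"
        using Q_deriv[OF j1 _ True] tz[OF True] NT by blast
      have ds: "((\<lambda>y. Q (sz z) y) has_derivative (\<lambda>h. DQ (sz z) z \<bullet> h)) (at z)"
        using Q_deriv[OF j2 _ True] sz[OF True] MT by blast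
      obtain d1 where d1: "d1 > 0" "\<forall>y. norm (y - z) < d1 \<longrightarrow>
          norm (Q (tz z) y - Q (tz z) z - DQ (tz z) z \<bullet> (y - z)) \<le> r * norm (y - z)"
        using dt r0 unfolding has_derivative_within_alt by blast
      obtain d2 where d2: "d2 > 0" "\<forall>y. norm (y - z) < d2 \<longrightarrow>
          norm (Q (sz z) y - Q (sz z) z - DQ (sz z) z \<bullet> (y - z)) \<le> r * norm (y - z)"
        using ds r0 unfolding has_derivative_within_alt by blast
      obtain k where k: "1 / real (Suc k) < min d1 d2"
        using d1(1) d2(1) by (metis min_less_iff_conj nat_approx_posE)
      have "good k z"
        unfolding good_def using True dz eq d1(2) d2(2) k by auto
      obtain c where c: "c \<in> D" "c \<in> ball z (1 / (4 * real (Suc k)))"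
        using D(2)[of "ball z (1 / (4 * real (Suc k)))"] by auto
      have "z \<in> S k c" using \<open>good k z\<close> c by (simp add: S_def dist_commute)
      then have "z \<in> Cn k c" using Cn by blast
      then show ?thesis using c(1) by (auto simp: Big_def)
    qed
  qed
  have "{z \<in> W. Vinf Q N z = Vinf Q M z} \<in> null_sets (completion P)"
    using sub BigP by (auto simp: null_sets_completion_iff2)
  moreover have "zbar \<in> interior W" using \<rho>0 by (simp add: W_def)
  ultimately show ?thesis using UN UM NT MT by blast
qed

end
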